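(* Let $(x_n)_n$ be a block sequence in $J$ which is equivalent to the unit vector basis $(e_n)$ of $J$. Then the closed linear span $[x_n]$ is complemented in $J$.
   Context: The James space $J$ is the space of real sequences $x=(x(n))_{n\in\mathbb N}$ with $\|x\|=\sup\big(\sum_{i=1}^m|\sum_{k\in I_i}x(k)|^2\big)^{1/2}<\infty$, the supremum taken over all $m$ and all pairwise disjoint finite intervals $I_1,\dots,I_m$ of $\mathbb N$. The unit vectors $(e_n)$ form a basis of $J$; a block sequence is a sequence of nonzero finitely supported vectors with $\max\operatorname{supp}x_n<\min\operatorname{supp}x_{n+1}$. *)

theory Defs
  imports Complex_Main
begin

definition james_sums :: "(nat \<Rightarrow> real) \<Rightarrow> real set" where
  "james_sums x = { sqrt (\<Sum>i<m. (\<Sum>k\<in>I i. x k)^2) | m (I :: nat \<Rightarrow> nat set).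
      (\<forall>i<m. \<exists>a b. I i = {a..b}) \<and> (\<forall>i<m. \<forall>j<m. i \<noteq> j \<longrightarrow> I i \<inter> I j = {}) }"

definition jnorm :: "(nat \<Rightarrow> real) \<Rightarrow> real" where
  "jnorm x = Sup (james_sums x)"

definition James :: "(nat \<Rightarrow> real) set" where
  "James = {x. bdd_above (james_sums x)}"

definition unit_vec :: "nat \<Rightarrow> nat \<Rightarrow> real" where
  "unit_vec n = (\<lambda>k. if k = n then 1 else 0)"

definition supp :: "(nat \<Rightarrow> real) \<Rightarrow> nat set" where
  "supp v = {k. v k \<noteq> 0}"

definition block_sequence :: "(nat \<Rightarrow> nat \<Rightarrow> real) \<Rightarrow> bool" where
  "block_sequence x \<longleftrightarrow>
     (\<forall>n. x n \<noteq> (\<lambda>_. 0) \<and> finite (supp (x n))) \<and>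
     (\<forall>n. Max (supp (x n)) < Min (supp (x (Suc n))))"

definition lincomb :: "(nat \<Rightarrow> real) \<Rightarrow> (nat \<Rightarrow> nat \<Rightarrow> real) \<Rightarrow> nat \<Rightarrow> nat \<Rightarrow> real" where
  "lincomb a x N = (\<lambda>k. \<Sum>n<N. a n * x n k)"

definition equivalent_seq :: "(nat \<Rightarrow> nat \<Rightarrow> real) \<Rightarrow> (nat \<Rightarrow> nat \<Rightarrow> real) \<Rightarrow> bool" where
  "equivalent_seq x y \<longleftrightarrow> (\<exists>c C. 0 < c \<and> 0 < C \<and>
     (\<forall>a N. c * jnorm (lincomb a y N) \<le> jnorm (lincomb a x N) \<and>
            jnorm (lincomb a x N) \<le> C * jnorm (lincomb a y N)))"

definition closed_span :: "(nat \<Rightarrow> nat \<Rightarrow> real) \<Rightarrow> (nat \<Rightarrow> real) set" where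
  "closed_span x = {y \<in> James. \<forall>\<epsilon>>0. \<exists>a N. jnorm (\<lambda>k. y k - lincomb a x N k) < \<epsilon>}"

definition complemented :: "(nat \<Rightarrow> real) set \<Rightarrow> bool" where
  "complemented Y \<longleftrightarrow> (\<exists>P. (\<forall>u\<in>James. P u \<in> Y) \<and>
     (\<forall>u\<in>James. \<forall>v\<in>James. \<forall>\<alpha> \<beta>. P (\<lambda>k. \<alpha> * u k + \<beta> * v k) = (\<lambda>k. \<alpha> * P u k + \<beta> * P v k)) \<and>
     (\<exists>M. \<forall>u\<in>James. jnorm (P u) \<le> M * jnorm u) \<and>
     (\<forall>y\<in>Y. P y = y))"

end

theory Submission
  imports Defs
begin

lemma cs_sum:
  fixes a b :: "'a \<Rightarrow> real"
  shows "(\<Sum>i\<in>A. a i * b i)^2 \<le> (\<Sum>i\<in>A. (a i)^2) * (\<Sum>i\<in>A. (b i)^2)"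
proof (cases "(\<Sum>i\<in>A. (b i)^2) > 0")
  case False
  then have "(\<Sum>i\<in>A. (b i)^2) = 0" by (meson not_less order_antisym sum_nonneg zero_le_power2)
  then have "\<forall>i\<in>A. b i = 0 \<or> infinite A" using sum_nonneg_eq_0_iff[of A "\<lambda>i. (b i)^2"] by auto
  then show ?thesis by (cases "finite A") auto
next
  case True
  define r where "r = (\<Sum>i\<in>A. a i * b i) / (\<Sum>i\<in>A. (b i)^2)"
  have "0 \<le> (\<Sum>i\<in>A. (a i - r * b i)^2)" by (simp add: sum_nonneg)
  also have "\<dots> = (\<Sum>i\<in>A. (a i)^2) - 2 * r * (\<Sum>i\<in>A. a i * b i) + r^2 * (\<Sum>i\<in>A. (b i)^2)"
    by (simp add: algebra_simps power2_eq_square sum_distrib_left sum_subtractf sum.distrib)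
  also have "\<dots> = (\<Sum>i\<in>A. (a i)^2) - (\<Sum>i\<in>A. a i * b i)^2 / (\<Sum>i\<in>A. (b i)^2)"
    using True by (simp add: r_def power2_eq_square field_simps)
  finally show ?thesis using True by (simp add: pos_divide_le_eq)
qed

lemma minkowski:
  fixes a b :: "'a \<Rightarrow> real"
  shows "sqrt (\<Sum>i\<in>A. (a i + b i)^2) \<le> sqrt (\<Sum>i\<in>A. (a i)^2) + sqrt (\<Sum>i\<in>A. (b i)^2)"
proof -
  let ?A = "\<Sum>i\<in>A. (a i)^2" and ?B = "\<Sum>i\<in>A. (b i)^2"
  have A0: "0 \<le> ?A" and B0: "0 \<le> ?B" by (auto intro: sum_nonneg)
  have "(\<Sum>i\<in>A. a i * b i) \<le> sqrt ?A * sqrt ?B"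
  proof -
    have "(\<Sum>i\<in>A. a i * b i) \<le> \<bar>\<Sum>i\<in>A. a i * b i\<bar>" by simp
    also have "\<dots> = sqrt ((\<Sum>i\<in>A. a i * b i)^2)" by simp
    also have "\<dots> \<le> sqrt (?A * ?B)" using cs_sum[of a b A] real_sqrt_le_mono by blast
    finally show ?thesis by (simp add: real_sqrt_mult)
  qed
  moreover have "(\<Sum>i\<in>A. (a i + b i)^2) = ?A + 2 * (\<Sum>i\<in>A. a i * b i) + ?B"
    by (simp add: power2_sum sum.distrib sum_distrib_left mult.assoc)
  moreover have "(sqrt ?A + sqrt ?B)^2 = ?A + 2 * (sqrt ?A * sqrt ?B) + ?B"
    using A0 B0 by (simp add: power2_sum)
  ultimately have "(\<Sum>i\<in>A. (a i + b i)^2) \<le> (sqrt ?A + sqrt ?B)^2" by linarith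
  then show ?thesis
    by (metis A0 B0 add_nonneg_nonneg real_sqrt_ge_zero real_sqrt_le_iff real_sqrt_unique)
qed

lemma sq_sum_card:
  fixes f :: "'a \<Rightarrow> real"
  shows "(\<Sum>i\<in>A. f i)^2 \<le> card A * (\<Sum>i\<in>A. (f i)^2)"
  using cs_sum[of "\<lambda>_. 1" f A] by simp


definition fam :: "nat \<Rightarrow> (nat \<Rightarrow> nat set) \<Rightarrow> bool" where
  "fam m I \<longleftrightarrow> (\<forall>i<m. \<exists>a b. I i = {a..b}) \<and> (\<forall>i<m. \<forall>j<m. i \<noteq> j \<longrightarrow> I i \<inter> I j = {})"

definition fs :: "(nat \<Rightarrow> real) \<Rightarrow> nat \<Rightarrow> (nat \<Rightarrow> nat set) \<Rightarrow> real" where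
  "fs u m I = (\<Sum>i<m. (\<Sum>k\<in>I i. u k)^2)"

lemma sqrt_le_sq: "0 \<le> s \<Longrightarrow> sqrt s \<le> B \<Longrightarrow> s \<le> B^2"
proof -
  assume s: "0 \<le> s" and b: "sqrt s \<le> B"
  have "0 \<le> sqrt s" using s by simp
  then have "(sqrt s)^2 \<le> B^2" using b power_mono by blast
  then show ?thesis using s by simp
qed

lemma js_eq: "james_sums u = {sqrt (fs u m I) | m I. fam m I}"
  by (simp add: james_sums_def fam_def fs_def)

lemma fs_nonneg: "0 \<le> fs u m I"
  by (simp add: fs_def sum_nonneg)

lemma fam0: "fam 0 I" by (simp add: fam_def)

lemma js_ne: "james_sums u \<noteq> {}"
  using fam0 by (auto simp: js_eq)

lemma James_iff: "u \<in> James \<longleftrightarrow> (\<exists>B. \<forall>m I. fam m I \<longrightarrow> fs u m I \<le> B)"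
proof
  assume "u \<in> James"
  then obtain B where B: "\<forall>s\<in>james_sums u. s \<le> B" by (auto simp: James_def bdd_above_def)
  have "fs u m I \<le> B^2" if "fam m I" for m I
  proof -
    have "sqrt (fs u m I) \<le> B" using B that by (auto simp: js_eq)
    then show ?thesis using fs_nonneg[of u m I] sqrt_le_sq by blast
  qed
  then show "\<exists>B. \<forall>m I. fam m I \<longrightarrow> fs u m I \<le> B" by blast
next
  assume "\<exists>B. \<forall>m I. fam m I \<longrightarrow> fs u m I \<le> B"
  then obtain B where "\<forall>m I. fam m I \<longrightarrow> fs u m I \<le> B" by blast
  then have "\<forall>s\<in>james_sums u. s \<le> sqrt B" by (auto simp: js_eq)
  then show "u \<in> James" by (auto simp: James_def bdd_above_def)
qed

lemma jnorm_ge: "u \<in> James \<Longrightarrow> fam m I \<Longrightarrow> sqrt (fs u m I) \<le> jnorm u"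
  unfolding jnorm_def James_def by (rule cSup_upper) (auto simp: js_eq)

lemma jnorm_nonneg: "u \<in> James \<Longrightarrow> 0 \<le> jnorm u"
  using jnorm_ge[of u 0 "\<lambda>_. {}", OF _ fam0] by (simp add: fs_def)

lemma fs_le: "u \<in> James \<Longrightarrow> fam m I \<Longrightarrow> fs u m I \<le> (jnorm u)^2"
  using jnorm_ge[of u m I] fs_nonneg[of u m I] sqrt_le_sq by blast

lemma jnorm_leI:
  assumes "0 \<le> M" and "\<And>m I. fam m I \<Longrightarrow> fs u m I \<le> M^2"
  shows "u \<in> James \<and> jnorm u \<le> M"
proof
  show "u \<in> James" using assms James_iff by blast
  show "jnorm u \<le> M" unfolding jnorm_def
  proof (rule cSup_least[OF js_ne])
    fix s assume "s \<in> james_sums u"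
    then obtain m I where "fam m I" "s = sqrt (fs u m I)" by (auto simp: js_eq)
    then show "s \<le> M" using assms real_sqrt_le_mono[of "fs u m I" "M^2"] by auto
  qed
qed

lemma transfer:
  assumes v: "v \<in> James" and K: "0 \<le> K"
    and h: "\<And>m I. fam m I \<Longrightarrow> \<exists>m' I'. fam m' I' \<and> fs u m I \<le> K^2 * fs v m' I'"
  shows "u \<in> James \<and> jnorm u \<le> K * jnorm v"
proof (rule jnorm_leI)
  show "0 \<le> K * jnorm v" using K jnorm_nonneg[OF v] by simp
  fix m I assume "fam m I"
  then obtain m' I' where "fam m' I'" "fs u m I \<le> K^2 * fs v m' I'" using h by blast
  moreover have "fs v m' I' \<le> (jnorm v)^2" using fs_le[OF v \<open>fam m' I'\<close>] .
  ultimately have "fs u m I \<le> K^2 * (jnorm v)^2"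
    by (meson K mult_left_mono order_trans zero_le_power2)
  then show "fs u m I \<le> (K * jnorm v)^2" by (simp add: power_mult_distrib)
qed

lemma coord_le: "u \<in> James \<Longrightarrow> \<bar>u k\<bar> \<le> jnorm u"
proof -
  assume u: "u \<in> James"
  have f: "fam 1 (\<lambda>_. {k..k})" unfolding fam_def by (intro conjI allI impI; blast)
  show ?thesis using jnorm_ge[OF u f] by (simp add: fs_def)
qed

lemma coord_sq_le: "u \<in> James \<Longrightarrow> (\<Sum>k<K. (u k)^2) \<le> (jnorm u)^2"
proof -
  assume u: "u \<in> James"
  have f: "fam K (\<lambda>i. {i..i})" unfolding fam_def
    by (intro conjI allI impI) (blast, simp)
  show ?thesis using fs_le[OF u f] by (simp add: fs_def)
qed

lemma jnorm_zero: "u \<in> James \<Longrightarrow> jnorm u \<le> 0 \<Longrightarrow> u = (\<lambda>_. 0)"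
proof (rule ext)
  fix k assume u: "u \<in> James" and j: "jnorm u \<le> 0"
  have "\<bar>u k\<bar> \<le> 0" using coord_le[OF u, of k] j by linarith
  then show "u k = 0" by simp
qed

lemma James_add:
  assumes u: "u \<in> James" and v: "v \<in> James"
  shows "(\<lambda>k. u k + v k) \<in> James \<and> jnorm (\<lambda>k. u k + v k) \<le> jnorm u + jnorm v"
proof (rule jnorm_leI)
  show "0 \<le> jnorm u + jnorm v" using jnorm_nonneg u v by (simp add: add_nonneg_nonneg)
  fix m I assume f: "fam m I"
  have "sqrt (fs (\<lambda>k. u k + v k) m I) \<le> sqrt (fs u m I) + sqrt (fs v m I)"
    unfolding fs_def using minkowski[of "\<lambda>i. \<Sum>k\<in>I i. u k" "\<lambda>i. \<Sum>k\<in>I i. v k" "{..<m}"]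
    by (simp add: sum.distrib)
  also have "\<dots> \<le> jnorm u + jnorm v" using jnorm_ge[OF u f] jnorm_ge[OF v f] by simp
  finally show "fs (\<lambda>k. u k + v k) m I \<le> (jnorm u + jnorm v)^2"
    using fs_nonneg sqrt_le_sq by blast
qed

lemma James_scale:
  assumes u: "u \<in> James"
  shows "(\<lambda>k. r * u k) \<in> James \<and> jnorm (\<lambda>k. r * u k) \<le> \<bar>r\<bar> * jnorm u"
proof (rule transfer[OF u])
  fix m I assume "fam m I"
  moreover have "fs (\<lambda>k. r * u k) m I = \<bar>r\<bar>^2 * fs u m I"
    by (simp add: fs_def sum_distrib_left[symmetric] power_mult_distrib)
  ultimately show "\<exists>m' I'. fam m' I' \<and> fs (\<lambda>k. r * u k) m I \<le> \<bar>r\<bar>^2 * fs u m' I'" by auto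
qed simp

lemma James_diff:
  assumes u: "u \<in> James" and v: "v \<in> James"
  shows "(\<lambda>k. u k - v k) \<in> James \<and> jnorm (\<lambda>k. u k - v k) \<le> jnorm u + jnorm v"
proof -
  have "(\<lambda>k. (-1) * v k) \<in> James \<and> jnorm (\<lambda>k. (-1) * v k) \<le> jnorm v"
    using James_scale[OF v, of "-1"] by simp
  then show ?thesis using James_add[OF u, of "\<lambda>k. (-1) * v k"] by simp
qed


lemma sum_split_add: "(\<Sum>i<m + (n::nat). f i) = (\<Sum>i<m. f i) + (\<Sum>i<n. f (m + i))"
  by (induction n) (auto simp: add_ac)

lemma unit_vec_James: "unit_vec n \<in> James \<and> jnorm (unit_vec n) \<le> 1"
proof (rule jnorm_leI)
  fix m I assume f: "fam m I"
  have fin: "finite (I i)" if "i < m" for i using f that by (auto simp: fam_def)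
  have "fs (unit_vec n) m I = (\<Sum>i<m. (if n \<in> I i then 1 else 0))"
    unfolding fs_def
  proof (rule sum.cong[OF refl])
    fix i assume "i \<in> {..<m}"
    then have "(\<Sum>k\<in>I i. unit_vec n k) = (if n \<in> I i then 1 else 0)"
      using fin[of i] by (simp add: unit_vec_def sum.delta)
    then show "(\<Sum>k\<in>I i. unit_vec n k)^2 = (if n \<in> I i then 1 else 0)" by simp
  qed
  also have "\<dots> = real (card {i\<in>{..<m}. n \<in> I i})"
    by (simp add: sum.inter_filter[symmetric])
  also have "\<dots> \<le> 1"
  proof -
    have "card {i\<in>{..<m}. n \<in> I i} \<le> Suc 0"
    proof (subst card_le_Suc0_iff_eq)
      show "finite {i\<in>{..<m}. n \<in> I i}" by simp
      show "\<forall>a1\<in>{i\<in>{..<m}. n \<in> I i}. \<forall>a2\<in>{i\<in>{..<m}. n \<in> I i}. a1 = a2"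
        using f unfolding fam_def by blast
    qed
    then show ?thesis by simp
  qed
  finally show "fs (unit_vec n) m I \<le> 1^2" by simp
qed simp

lemma lincomb_James:
  assumes "\<And>n. n < N \<Longrightarrow> y n \<in> James"
  shows "lincomb a y N \<in> James \<and> jnorm (lincomb a y N) \<le> (\<Sum>n<N. \<bar>a n\<bar> * jnorm (y n))"
  using assms
proof (induction N)
  case 0
  have "lincomb a y 0 = (\<lambda>k. 0 * unit_vec 0 k)" by (simp add: lincomb_def)
  then show ?case using James_scale[of "unit_vec 0" 0] unit_vec_James by simp
next
  case (Suc N)
  have e: "lincomb a y (Suc N) = (\<lambda>k. lincomb a y N k + a N * y N k)"
    by (simp add: lincomb_def)
  have ih: "lincomb a y N \<in> James \<and> jnorm (lincomb a y N) \<le> (\<Sum>n<N. \<bar>a n\<bar> * jnorm (y n))"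
    using Suc by simp
  have s: "(\<lambda>k. a N * y N k) \<in> James \<and> jnorm (\<lambda>k. a N * y N k) \<le> \<bar>a N\<bar> * jnorm (y N)"
    using James_scale[of "y N" "a N"] Suc.prems by simp
  show ?case using James_add[of "lincomb a y N" "\<lambda>k. a N * y N k"] ih s unfolding e by auto
qed

lemma lincomb_unit: "lincomb a unit_vec N k = (if k < N then a k else 0)"
proof -
  have e: "\<And>n. a n * unit_vec n k = (if k = n then a k else 0)"
    by (auto simp: unit_vec_def)
  show ?thesis unfolding lincomb_def e by (simp add: sum.delta sum.delta')
qed

lemma restrict_ge:
  assumes u: "u \<in> James"
  shows "(\<lambda>k. if M \<le> k then u k else 0) \<in> James \<and> jnorm (\<lambda>k. if M \<le> k then u k else 0) \<le> jnorm u"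
proof -
  have "(\<lambda>k. if M \<le> k then u k else 0) \<in> James \<and> jnorm (\<lambda>k. if M \<le> k then u k else 0) \<le> 1 * jnorm u"
  proof (rule transfer[OF u])
    fix m I assume f: "fam m I"
    have f2: "fam m (\<lambda>i. I i \<inter> {M..})"
    proof -
      have "\<exists>a b. I i \<inter> {M..} = {a..b}" if "i < m" for i
      proof -
        obtain a b where "I i = {a..b}" using f \<open>i<m\<close> unfolding fam_def by blast
        then have "I i \<inter> {M..} = {max a M..b}" by auto
        then show ?thesis by blast
      qed
      then show ?thesis using f unfolding fam_def by blast
    qed
    have "fs (\<lambda>k. if M \<le> k then u k else 0) m I = fs u m (\<lambda>i. I i \<inter> {M..})"
      unfolding fs_def
    proof (rule sum.cong[OF refl])
      fix i assume "i \<in> {..<m}"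
      then have fin: "finite (I i)" using f by (auto simp: fam_def)
      have "(\<Sum>k\<in>I i. if M \<le> k then u k else 0) = (\<Sum>k\<in>I i \<inter> {M..}. u k)"
        using fin by (simp add: sum.inter_restrict)
      then show "(\<Sum>k\<in>I i. if M \<le> k then u k else 0)^2 = (\<Sum>k\<in>I i \<inter> {M..}. u k)^2" by simp
    qed
    then show "\<exists>m' I'. fam m' I' \<and> fs (\<lambda>k. if M \<le> k then u k else 0) m I \<le> 1^2 * fs u m' I'"
      using f2 by auto
  qed simp
  then show ?thesis by simp
qed

lemma restrict_lt:
  assumes u: "u \<in> James"
  shows "(\<lambda>k. if k < M then u k else 0) \<in> James \<and> jnorm (\<lambda>k. if k < M then u k else 0) \<le> jnorm u"
proof -
  have "(\<lambda>k. if k < M then u k else 0) \<in> James \<and> jnorm (\<lambda>k. if k < M then u k else 0) \<le> 1 * jnorm u"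
  proof (rule transfer[OF u])
    fix m I assume f: "fam m I"
    have f2: "fam m (\<lambda>i. I i \<inter> {..<M})"
    proof -
      have "\<exists>a b. I i \<inter> {..<M} = {a..b}" if "i < m" for i
      proof -
        obtain a b where ab: "I i = {a..b}" using f \<open>i<m\<close> unfolding fam_def by blast
        show ?thesis
        proof (cases "M = 0")
          case True
          then have "I i \<inter> {..<M} = {1..0}" by auto
          then show ?thesis by blast
        next
          case False
          then have "I i \<inter> {..<M} = {a..min b (M - 1)}" using ab by auto
          then show ?thesis by blast
        qed
      qed
      then show ?thesis using f unfolding fam_def by blast
    qed
    have "fs (\<lambda>k. if k < M then u k else 0) m I = fs u m (\<lambda>i. I i \<inter> {..<M})"
      unfolding fs_def
    proof (rule sum.cong[OF refl])
      fix i assume "i \<in> {..<m}"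
      then have fin: "finite (I i)" using f by (auto simp: fam_def)
      have "(\<Sum>k\<in>I i. if k < M then u k else 0) = (\<Sum>k\<in>I i \<inter> {..<M}. u k)"
        using fin by (simp add: sum.inter_restrict)
      then show "(\<Sum>k\<in>I i. if k < M then u k else 0)^2 = (\<Sum>k\<in>I i \<inter> {..<M}. u k)^2" by simp
    qed
    then show "\<exists>m' I'. fam m' I' \<and> fs (\<lambda>k. if k < M then u k else 0) m I \<le> 1^2 * fs u m' I'"
      using f2 by auto
  qed simp
  then show ?thesis by simp
qed

lemma fam_bounded: "fam m I \<Longrightarrow> \<exists>K. \<forall>i<m. I i \<subseteq> {..<K}"
proof -
  assume f: "fam m I"
  have "finite (\<Union>i<m. I i)" using f by (auto simp: fam_def)
  then obtain K where "\<forall>n\<in>(\<Union>i<m. I i). n < K" using finite_nat_set_iff_bounded by blast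
  then show ?thesis by auto
qed

lemma local_bound:
  assumes M: "0 \<le> M"
    and h: "\<And>K. \<exists>w. w \<in> James \<and> jnorm w \<le> M \<and> (\<forall>k<K. w k = u k)"
  shows "u \<in> James \<and> jnorm u \<le> M"
proof (rule jnorm_leI[OF M])
  fix m I assume f: "fam m I"
  obtain K where K: "\<forall>i<m. I i \<subseteq> {..<K}" using fam_bounded[OF f] by blast
  obtain w where w: "w \<in> James" "jnorm w \<le> M" "\<forall>k<K. w k = u k" using h by blast
  have "fs u m I = fs w m I" unfolding fs_def
  proof (rule sum.cong[OF refl])
    fix i assume "i \<in> {..<m}"
    then have "\<forall>k\<in>I i. w k = u k" using K w(3) by blast
    then show "(\<Sum>k\<in>I i. u k)^2 = (\<Sum>k\<in>I i. w k)^2" by simp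
  qed
  also have "\<dots> \<le> (jnorm w)^2" using fs_le[OF w(1) f] .
  also have "\<dots> \<le> M^2" using w(2) jnorm_nonneg[OF w(1)] power_mono by blast
  finally show "fs u m I \<le> M^2" .
qed


lemma fam_restrict_ge: "fam m I \<Longrightarrow> fam m (\<lambda>i. I i \<inter> {M..})"
proof -
  assume f: "fam m I"
  have "\<exists>a b. I i \<inter> {M..} = {a..b}" if "i < m" for i
  proof -
    obtain a b where "I i = {a..b}" using f \<open>i<m\<close> unfolding fam_def by blast
    then have "I i \<inter> {M..} = {max a M..b}" by auto
    then show ?thesis by blast
  qed
  then show ?thesis using f unfolding fam_def by blast
qed

lemma fs_restrict_ge: "fam m I \<Longrightarrow> fs (\<lambda>k. if M \<le> k then u k else 0) m I = fs u m (\<lambda>i. I i \<inter> {M..})"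
  unfolding fs_def
proof (rule sum.cong[OF refl])
  fix i assume f: "fam m I" and "i \<in> {..<m}"
  then have fin: "finite (I i)" by (auto simp: fam_def)
  have "(\<Sum>k\<in>I i. if M \<le> k then u k else 0) = (\<Sum>k\<in>I i \<inter> {M..}. u k)"
    using fin by (simp add: sum.inter_restrict)
  then show "(\<Sum>k\<in>I i. if M \<le> k then u k else 0)^2 = (\<Sum>k\<in>I i \<inter> {M..}. u k)^2" by simp
qed

lemma tail_small:
  assumes u: "u \<in> James" and e: "0 < \<epsilon>"
  shows "\<exists>M. jnorm (\<lambda>k. if M \<le> k then u k else 0) < \<epsilon>"
proof (rule ccontr)
  assume "\<not> ?thesis"
  then have big: "\<And>M. \<epsilon> \<le> jnorm (\<lambda>k. if M \<le> k then u k else 0)" by (simp add: not_less)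
  have ex: "\<exists>m I. fam m I \<and> (\<forall>i<m. I i \<subseteq> {M..}) \<and> \<epsilon>^2/4 < fs u m I" for M
  proof (rule ccontr)
    assume n: "\<not> ?thesis"
    have "\<And>m I. fam m I \<Longrightarrow> fs (\<lambda>k. if M \<le> k then u k else 0) m I \<le> (\<epsilon>/2)^2"
    proof -
      fix m I assume f: "fam m I"
      have "\<not> \<epsilon>^2/4 < fs u m (\<lambda>i. I i \<inter> {M..})"
        using n fam_restrict_ge[OF f, of M] by blast
      then show "fs (\<lambda>k. if M \<le> k then u k else 0) m I \<le> (\<epsilon>/2)^2"
        using fs_restrict_ge[OF f] by (simp add: power_divide)
    qed
    then have "jnorm (\<lambda>k. if M \<le> k then u k else 0) \<le> \<epsilon>/2"
      using jnorm_leI[of "\<epsilon>/2"] e by auto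
    then show False using big[of M] e by linarith
  qed
  have grow: "\<exists>m I K. fam m I \<and> (\<forall>i<m. I i \<subseteq> {..<K}) \<and> real j * (\<epsilon>^2/4) \<le> fs u m I" for j
  proof (induction j)
    case 0
    show ?case by (rule exI[of _ 0], rule exI[of _ "\<lambda>_. {}"], rule exI[of _ 0]) (simp add: fam0 fs_def)
  next
    case (Suc j)
    then obtain m I K where f: "fam m I" and K: "\<forall>i<m. I i \<subseteq> {..<K}"
      and s: "real j * (\<epsilon>^2/4) \<le> fs u m I" by blast
    obtain m2 I2 where f2: "fam m2 I2" and K2: "\<forall>i<m2. I2 i \<subseteq> {K..}" and s2: "\<epsilon>^2/4 < fs u m2 I2"
      using ex[of K] by blast
    obtain K2 where K2': "\<forall>i<m2. I2 i \<subseteq> {..<K2}" using fam_bounded[OF f2] by blast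
    define I3 where "I3 = (\<lambda>i. if i < m then I i else I2 (i - m))"
    have f3: "fam (m + m2) I3"
      unfolding fam_def
    proof (intro conjI allI impI)
      fix i assume "i < m + m2"
      then show "\<exists>a b. I3 i = {a..b}" using f f2 unfolding fam_def I3_def
        by (cases "i < m") auto
    next
      fix i j assume i: "i < m + m2" and j: "j < m + m2" and ij: "i \<noteq> j"
      show "I3 i \<inter> I3 j = {}"
      proof (cases "i < m"; cases "j < m")
        assume "i < m" "j < m" then show ?thesis using f ij unfolding fam_def I3_def by auto
      next
        assume a: "i < m" "\<not> j < m"
        then have "I i \<subseteq> {..<K}" "I2 (j - m) \<subseteq> {K..}" using K K2 j by auto
        moreover have "{..<K} \<inter> {K..} = ({}::nat set)" by auto
        ultimately show ?thesis using a unfolding I3_def by auto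
      next
        assume a: "\<not> i < m" "j < m"
        then have "I j \<subseteq> {..<K}" "I2 (i - m) \<subseteq> {K..}" using K K2 i by auto
        moreover have "{..<K} \<inter> {K..} = ({}::nat set)" by auto
        ultimately show ?thesis using a unfolding I3_def by auto
      next
        assume a: "\<not> i < m" "\<not> j < m"
        then have "i - m \<noteq> j - m" "i - m < m2" "j - m < m2" using i j ij by auto
        then show ?thesis using f2 a unfolding fam_def I3_def by auto
      qed
    qed
    have K3: "\<forall>i<m + m2. I3 i \<subseteq> {..<max K K2}"
    proof (intro allI impI)
      fix i assume i: "i < m + m2"
      show "I3 i \<subseteq> {..<max K K2}"
      proof (cases "i < m")
        case True
        then have "I i \<subseteq> {..<K}" using K by auto
        then show ?thesis unfolding I3_def using True by auto
      next
        case False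
        then have "I2 (i - m) \<subseteq> {..<K2}" using K2' i by auto
        then show ?thesis unfolding I3_def using False by auto
      qed
    qed
    have "fs u (m + m2) I3 = fs u m I + fs u m2 I2"
      unfolding fs_def sum_split_add I3_def by simp
    then have "real (Suc j) * (\<epsilon>^2/4) \<le> fs u (m + m2) I3" using s s2 by (simp add: algebra_simps)
    then show ?case using f3 K3 by blast
  qed
  obtain B where B: "\<forall>m I. fam m I \<longrightarrow> fs u m I \<le> B" using u James_iff by blast
  have pos: "0 < \<epsilon>^2/4" using e by simp
  obtain j :: nat where "B < real j * (\<epsilon>^2/4)"
    using reals_Archimedean3[OF pos] by blast
  then show False using grow[of j] B by force
qed


lemma lincomb_unit_James: "lincomb a unit_vec N \<in> James \<and> jnorm (lincomb a unit_vec N) \<le> (\<Sum>n<N. \<bar>a n\<bar>)"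
proof -
  have "lincomb a unit_vec N \<in> James \<and> jnorm (lincomb a unit_vec N) \<le> (\<Sum>n<N. \<bar>a n\<bar> * jnorm (unit_vec n))"
    using lincomb_James[of N unit_vec a] unit_vec_James by blast
  moreover have "(\<Sum>n<N. \<bar>a n\<bar> * jnorm (unit_vec n)) \<le> (\<Sum>n<N. \<bar>a n\<bar>)"
    by (rule sum_mono) (use unit_vec_James in \<open>simp add: mult_left_le\<close>)
  ultimately show ?thesis by linarith
qed

lemma convex_ivl:
  fixes S :: "nat set"
  assumes "finite S" and cv: "\<And>x y z. x \<in> S \<Longrightarrow> z \<in> S \<Longrightarrow> x \<le> y \<Longrightarrow> y \<le> z \<Longrightarrow> y \<in> S"
  shows "\<exists>a b. S = {a..b}"
proof (cases "S = {}")
  case True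
  then have "S = {1..0}" by simp
  then show ?thesis by blast
next
  case False
  have "S = {Min S..Max S}"
  proof
    show "S \<subseteq> {Min S..Max S}" using assms(1) by auto
    show "{Min S..Max S} \<subseteq> S"
    proof
      fix y assume "y \<in> {Min S..Max S}"
      then show "y \<in> S" using cv[of "Min S" "Max S" y] Min_in[OF assms(1) False] Max_in[OF assms(1) False]
        by auto
    qed
  qed
  then show ?thesis by blast
qed

locale blk =
  fixes x :: "nat \<Rightarrow> nat \<Rightarrow> real" and c C :: real
  assumes bs: "block_sequence x" and cpos: "0 < c" and Cpos: "0 < C"
    and eqv: "\<And>a N. c * jnorm (lincomb a unit_vec N) \<le> jnorm (lincomb a x N) \<and>
                     jnorm (lincomb a x N) \<le> C * jnorm (lincomb a unit_vec N)"
begin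

definition p where "p n = Min (supp (x n))"
definition q where "q n = Max (supp (x n))"
definition sig where "sig n = (\<Sum>k\<in>{p n..q n}. x n k)"

lemma fin: "finite (supp (x n))" using bs by (simp add: block_sequence_def)

lemma ne: "supp (x n) \<noteq> {}"
proof
  assume "supp (x n) = {}"
  then have "x n = (\<lambda>_. 0)" by (auto simp: supp_def)
  then show False using bs by (simp add: block_sequence_def)
qed

lemma pq: "p n \<le> q n"
  unfolding p_def q_def using Min_le[OF fin Max_in[OF fin ne]] .

lemma qp: "q n < p (Suc n)"
  using bs unfolding block_sequence_def p_def q_def by blast

lemma outside: "k \<notin> {p n..q n} \<Longrightarrow> x n k = 0"
proof -
  assume k: "k \<notin> {p n..q n}"
  show "x n k = 0"
  proof (rule ccontr)
    assume "x n k \<noteq> 0"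
    then have "k \<in> supp (x n)" by (simp add: supp_def)
    then have "p n \<le> k" "k \<le> q n" unfolding p_def q_def using fin by auto
    then show False using k by auto
  qed
qed

lemma q_lt_p: "m < n \<Longrightarrow> q m < p n"
proof (induction n)
  case 0 then show ?case by simp
next
  case (Suc n)
  show ?case
  proof (cases "m = n")
    case True then show ?thesis using qp by simp
  next
    case False
    then have "q m < p n" using Suc by simp
    then show ?thesis using pq[of n] qp[of n] by linarith
  qed
qed

lemma p_mono: "m < n \<Longrightarrow> p m < p n"
  using q_lt_p pq le_less_trans by blast

lemma p_le: "m \<le> n \<Longrightarrow> p m \<le> p n"
  using p_mono by (cases "m = n") (auto intro: less_imp_le)

lemma q_le: "m \<le> n \<Longrightarrow> q m \<le> q n"
proof -
  assume "m \<le> n"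
  then show "q m \<le> q n"
  proof (cases "m = n")
    case False
    then have "q m < p n" using q_lt_p \<open>m \<le> n\<close> by simp
    then show ?thesis using pq[of n] by linarith
  qed simp
qed

lemma n_le_p: "n \<le> p n"
proof (induction n)
  case (Suc n) then show ?case using p_mono[of n "Suc n"] by simp
qed simp

lemma blocks_disj: "m \<noteq> n \<Longrightarrow> {p m..q m} \<inter> {p n..q n} = {}"
proof -
  assume "m \<noteq> n"
  then consider "m < n" | "n < m" by linarith
  then show ?thesis
  proof cases
    case 1 then have "q m < p n" by (rule q_lt_p) then show ?thesis by auto
  next
    case 2 then have "q n < p m" by (rule q_lt_p) then show ?thesis by auto
  qed
qed

lemma x_zero_big: "k < n \<Longrightarrow> x n k = 0"
  using n_le_p[of n] outside[of k n] by auto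

lemma x_James: "x n \<in> James"
proof -
  have "x n = lincomb (x n) unit_vec (Suc (q n))"
  proof
    fix k show "x n k = lincomb (x n) unit_vec (Suc (q n)) k"
      using outside[of k n] by (auto simp: lincomb_unit)
  qed
  then show ?thesis using lincomb_unit_James by metis
qed

lemma x_norm: "jnorm (x n) \<le> C"
proof -
  define a where "a = (\<lambda>m. if m = n then 1 else (0::real))"
  have e1: "lincomb a x (Suc n) = x n"
    by (rule ext) (simp add: lincomb_def a_def sum.delta')
  have e2: "lincomb a unit_vec (Suc n) = unit_vec n"
    by (rule ext) (simp add: lincomb_unit a_def unit_vec_def)
  have "jnorm (x n) \<le> C * jnorm (unit_vec n)" using eqv[of a "Suc n"] e1 e2 by simp
  also have "\<dots> \<le> C" using unit_vec_James Cpos by (simp add: mult_left_le)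
  finally show ?thesis .
qed

end

context blk begin

lemma sum_I_x_full: "finite A \<Longrightarrow> {p n..q n} \<subseteq> A \<Longrightarrow> (\<Sum>k\<in>A. x n k) = sig n"
proof -
  assume "finite A" "{p n..q n} \<subseteq> A"
  moreover have "\<forall>i\<in>A - {p n..q n}. x n i = 0" using outside by blast
  ultimately show ?thesis unfolding sig_def by (rule sum.mono_neutral_right)
qed

lemma sum_I_x_empty: "{p n..q n} \<inter> A = {} \<Longrightarrow> (\<Sum>k\<in>A. x n k) = 0"
  by (rule sum.neutral) (use outside in blast)

lemma card_hit: "card {n\<in>{..<N}. y \<in> {p n..q n}} \<le> 1"
proof -
  have "card {n\<in>{..<N}. y \<in> {p n..q n}} \<le> Suc 0"
  proof (subst card_le_Suc0_iff_eq)
    show "finite {n\<in>{..<N}. y \<in> {p n..q n}}" by simp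
    show "\<forall>a1\<in>{n\<in>{..<N}. y \<in> {p n..q n}}. \<forall>a2\<in>{n\<in>{..<N}. y \<in> {p n..q n}}. a1 = a2"
      using blocks_disj by blast
  qed
  then show ?thesis by simp
qed

lemma card_partial:
  assumes Ii: "I = {lo..hi}"
  shows "card {n\<in>{..<N}. \<not> {p n..q n} \<subseteq> I \<and> {p n..q n} \<inter> I \<noteq> {}} \<le> 2"
proof -
  let ?P = "{n\<in>{..<N}. \<not> {p n..q n} \<subseteq> I \<and> {p n..q n} \<inter> I \<noteq> {}}"
  have sub: "?P \<subseteq> {n\<in>{..<N}. lo \<in> {p n..q n}} \<union> {n\<in>{..<N}. hi \<in> {p n..q n}}"
  proof
    fix n assume "n \<in> ?P"
    then have nN: "n < N" and "\<not> {p n..q n} \<subseteq> I" and "{p n..q n} \<inter> I \<noteq> {}" by auto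
    then obtain k k' where k: "k \<in> {p n..q n}" "k \<in> I" and k': "k' \<in> {p n..q n}" "k' \<notin> I" by blast
    have "lo \<in> {p n..q n} \<or> hi \<in> {p n..q n}"
    proof (cases "k' < lo")
      case True
      then show ?thesis using k k' Ii by auto
    next
      case False
      then have "hi < k'" using k' Ii by auto
      then show ?thesis using k k' Ii by auto
    qed
    then show "n \<in> {n\<in>{..<N}. lo \<in> {p n..q n}} \<union> {n\<in>{..<N}. hi \<in> {p n..q n}}" using nN by auto
  qed
  have "card ?P \<le> card ({n\<in>{..<N}. lo \<in> {p n..q n}} \<union> {n\<in>{..<N}. hi \<in> {p n..q n}})"
    by (rule card_mono[OF _ sub]) simp
  also have "\<dots> \<le> card {n\<in>{..<N}. lo \<in> {p n..q n}} + card {n\<in>{..<N}. hi \<in> {p n..q n}}"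
    by (rule card_Un_le)
  also have "\<dots> \<le> 2" using card_hit[of N lo] card_hit[of N hi] by linarith
  finally show ?thesis .
qed

lemma per_interval:
  assumes Ii: "I = {lo..hi}"
  shows "(\<Sum>k\<in>I. lincomb a x N k)^2 \<le>
    2 * (\<Sum>n\<in>{n\<in>{..<N}. {p n..q n} \<subseteq> I}. a n * sig n)^2 + 4 * (\<Sum>n<N. (a n)^2 * (\<Sum>k\<in>I. x n k)^2)"
proof -
  let ?F = "{n\<in>{..<N}. {p n..q n} \<subseteq> I}"
  let ?P = "{n\<in>{..<N}. \<not> {p n..q n} \<subseteq> I \<and> {p n..q n} \<inter> I \<noteq> {}}"
  define t where "t n = (\<Sum>k\<in>I. x n k)" for n
  have finI: "finite I" using Ii by simp
  have s: "(\<Sum>k\<in>I. lincomb a x N k) = (\<Sum>n<N. a n * t n)"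
    unfolding lincomb_def t_def by (simp add: sum.swap[of _ I] sum_distrib_left)
  have z: "\<forall>n\<in>{..<N} - (?F \<union> ?P). a n * t n = 0"
    unfolding t_def using sum_I_x_empty by auto
  have "(\<Sum>n<N. a n * t n) = (\<Sum>n\<in>?F \<union> ?P. a n * t n)"
    by (rule sum.mono_neutral_right[OF _ _ z]) auto
  also have "\<dots> = (\<Sum>n\<in>?F. a n * t n) + (\<Sum>n\<in>?P. a n * t n)"
    by (rule sum.union_disjoint) auto
  also have "(\<Sum>n\<in>?F. a n * t n) = (\<Sum>n\<in>?F. a n * sig n)"
    unfolding t_def using sum_I_x_full[OF finI] by auto
  finally have s2: "(\<Sum>k\<in>I. lincomb a x N k) = (\<Sum>n\<in>?F. a n * sig n) + (\<Sum>n\<in>?P. a n * t n)"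
    using s by simp
  have "(\<Sum>n\<in>?P. a n * t n)^2 \<le> card ?P * (\<Sum>n\<in>?P. (a n * t n)^2)"
    by (rule sq_sum_card)
  also have "\<dots> \<le> 2 * (\<Sum>n\<in>?P. (a n * t n)^2)"
    using card_partial[OF Ii, of N] by (intro mult_right_mono) (auto intro: sum_nonneg)
  also have "(\<Sum>n\<in>?P. (a n * t n)^2) \<le> (\<Sum>n<N. (a n * t n)^2)"
    by (rule sum_mono2) auto
  finally have b: "(\<Sum>n\<in>?P. a n * t n)^2 \<le> 2 * (\<Sum>n<N. (a n)^2 * (t n)^2)"
    by (simp add: power_mult_distrib)
  have ab: "(X + Y)^2 \<le> 2 * X^2 + 2 * Y^2" for X Y :: real
    using sum_squares_bound[of X Y] by (simp add: power2_sum)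
  show ?thesis unfolding s2 using ab[of "\<Sum>n\<in>?F. a n * sig n" "\<Sum>n\<in>?P. a n * t n"] b
    unfolding t_def by linarith
qed

lemma upper:
  "(jnorm (lincomb a x N))^2 \<le> 2 * (jnorm (lincomb (\<lambda>n. a n * sig n) unit_vec N))^2 + 4 * C^2 * (\<Sum>n<N. (a n)^2)"
proof -
  define v where "v = lincomb a x N"
  define w where "w = lincomb (\<lambda>n. a n * sig n) unit_vec N"
  have vJ: "v \<in> James" using lincomb_James[of N x a] x_James unfolding v_def by blast
  have wJ: "w \<in> James" using lincomb_unit_James unfolding w_def by blast
  define R where "R = 2 * (jnorm w)^2 + 4 * C^2 * (\<Sum>n<N. (a n)^2)"
  have R0: "0 \<le> R" unfolding R_def by (intro add_nonneg_nonneg mult_nonneg_nonneg sum_nonneg) auto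
  have key: "fs v m I \<le> R" if f: "fam m I" for m I
  proof -
    define F where "F i = {n\<in>{..<N}. {p n..q n} \<subseteq> I i}" for i
    have per: "(\<Sum>k\<in>I i. v k)^2 \<le> 2 * (\<Sum>n\<in>F i. a n * sig n)^2 + 4 * (\<Sum>n<N. (a n)^2 * (\<Sum>k\<in>I i. x n k)^2)"
      if "i < m" for i
    proof -
      obtain lo hi where "I i = {lo..hi}" using f \<open>i < m\<close> unfolding fam_def by blast
      then show ?thesis unfolding v_def F_def by (rule per_interval)
    qed
    have famF: "fam m F"
      unfolding fam_def
    proof (intro conjI allI impI)
      fix i assume i: "i < m"
      obtain lo hi where Ii: "I i = {lo..hi}" using f i unfolding fam_def by blast
      show "\<exists>a b. F i = {a..b}"
      proof (rule convex_ivl)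
        show "finite (F i)" unfolding F_def by simp
        fix n1 n2 n3 assume a: "n1 \<in> F i" "n3 \<in> F i" "n1 \<le> n2" "n2 \<le> n3"
        have "n2 < N" using a unfolding F_def by auto
        moreover have "{p n2..q n2} \<subseteq> I i"
        proof
          fix k assume k: "k \<in> {p n2..q n2}"
          have "p n1 \<in> I i" "q n3 \<in> I i" using a pq[of n1] pq[of n3] unfolding F_def by auto
          moreover have "p n1 \<le> k" "k \<le> q n3" using k p_le[OF a(3)] q_le[OF a(4)] by auto
          ultimately show "k \<in> I i" using Ii by auto
        qed
        ultimately show "n2 \<in> F i" unfolding F_def by auto
      qed
    next
      fix i j assume i: "i < m" and j: "j < m" and ij: "i \<noteq> j"
      have d: "I i \<inter> I j = {}" using f i j ij unfolding fam_def by blast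
      show "F i \<inter> F j = {}"
      proof (rule ccontr)
        assume "F i \<inter> F j \<noteq> {}"
        then obtain n where "{p n..q n} \<subseteq> I i" "{p n..q n} \<subseteq> I j" unfolding F_def by auto
        then have "p n \<in> I i \<inter> I j" using pq[of n] by auto
        then show False using d by simp
      qed
    qed
    have s1: "(\<Sum>i<m. (\<Sum>n\<in>F i. a n * sig n)^2) \<le> (jnorm w)^2"
    proof -
      have "(\<Sum>i<m. (\<Sum>n\<in>F i. a n * sig n)^2) = fs w m F"
        unfolding fs_def
      proof (rule sum.cong[OF refl])
        fix i assume "i \<in> {..<m}"
        have "(\<Sum>n\<in>F i. w n) = (\<Sum>n\<in>F i. a n * sig n)"
          by (rule sum.cong[OF refl]) (auto simp: w_def lincomb_unit F_def)
        then show "(\<Sum>n\<in>F i. a n * sig n)^2 = (\<Sum>n\<in>F i. w n)^2" by simp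
      qed
      then show ?thesis using fs_le[OF wJ famF] by simp
    qed
    have s2: "(\<Sum>i<m. (\<Sum>n<N. (a n)^2 * (\<Sum>k\<in>I i. x n k)^2)) \<le> C^2 * (\<Sum>n<N. (a n)^2)"
    proof -
      have "(\<Sum>i<m. (\<Sum>n<N. (a n)^2 * (\<Sum>k\<in>I i. x n k)^2)) = (\<Sum>n<N. (a n)^2 * fs (x n) m I)"
        unfolding fs_def by (simp add: sum.swap[of _ "{..<m}"] sum_distrib_left)
      also have "\<dots> \<le> (\<Sum>n<N. (a n)^2 * C^2)"
      proof (rule sum_mono)
        fix n assume "n \<in> {..<N}"
        have "fs (x n) m I \<le> (jnorm (x n))^2" using fs_le[OF x_James f] .
        also have "\<dots> \<le> C^2" using x_norm[of n] jnorm_nonneg[OF x_James] power_mono by blast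
        finally show "(a n)^2 * fs (x n) m I \<le> (a n)^2 * C^2" by (simp add: mult_left_mono)
      qed
      also have "\<dots> = C^2 * (\<Sum>n<N. (a n)^2)" by (simp add: sum_distrib_left mult.commute)
      finally show ?thesis .
    qed
    have "fs v m I \<le> (\<Sum>i<m. 2 * (\<Sum>n\<in>F i. a n * sig n)^2 + 4 * (\<Sum>n<N. (a n)^2 * (\<Sum>k\<in>I i. x n k)^2))"
      unfolding fs_def by (rule sum_mono) (use per in auto)
    also have "\<dots> = 2 * (\<Sum>i<m. (\<Sum>n\<in>F i. a n * sig n)^2) + 4 * (\<Sum>i<m. (\<Sum>n<N. (a n)^2 * (\<Sum>k\<in>I i. x n k)^2))"
      by (simp add: sum.distrib sum_distrib_left)
    also have "\<dots> \<le> R" unfolding R_def using s1 s2 by linarith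
    finally show ?thesis .
  qed
  have "jnorm v \<le> sqrt R" using jnorm_leI[of "sqrt R" v] key R0 by simp
  then have "(jnorm v)^2 \<le> (sqrt R)^2" using jnorm_nonneg[OF vJ] power_mono by blast
  then show ?thesis using R0 unfolding R_def v_def w_def by simp
qed

end

context blk begin

lemma bad_card:
  assumes finF: "finite F" and bad: "\<And>n. n \<in> F \<Longrightarrow> \<bar>sig n\<bar> < c/2"
  shows "real (card F) \<le> 8 * C^2 / c^2"
proof -
  obtain N where N: "\<forall>n\<in>F. n < N" using finF finite_nat_set_iff_bounded by blast
  define a where "a n = (if n \<in> F then 1 else (0::real))" for n
  define k where "k = real (card F)"
  have k0: "0 \<le> k" unfolding k_def by simp
  have cF: "{j\<in>{0..N}. j \<in> F} = F" using N by auto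
  have Le: "k \<le> jnorm (lincomb a unit_vec N)"
  proof -
    have J: "lincomb a unit_vec N \<in> James" using lincomb_unit_James by blast
    have f: "fam 1 (\<lambda>_. {0..N})" unfolding fam_def by blast
    have "(\<Sum>j\<in>{0..N}. lincomb a unit_vec N j) = (\<Sum>j\<in>{0..N}. if j \<in> F then 1 else 0)"
      by (rule sum.cong[OF refl]) (use N in \<open>auto simp: lincomb_unit a_def\<close>)
    also have "\<dots> = k" unfolding k_def using sum.inter_filter[of "{0..N}" "\<lambda>_. (1::real)" "\<lambda>j. j \<in> F"] cF by simp
    finally have "fs (lincomb a unit_vec N) 1 (\<lambda>_. {0..N}) = k^2" by (simp add: fs_def)
    then show ?thesis using jnorm_ge[OF J f] k0 by simp
  qed
  have h1: "c * k \<le> jnorm (lincomb a x N)"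
    using eqv[of a N] Le cpos by (meson mult_left_mono less_imp_le order_trans)
  have sq: "(\<Sum>n<N. (a n)^2) = k"
  proof -
    have "(\<Sum>n<N. (a n)^2) = (\<Sum>n<N. if n \<in> F then 1 else 0)"
      by (rule sum.cong) (auto simp: a_def)
    also have "\<dots> = k" unfolding k_def
      using sum.inter_filter[of "{..<N}" "\<lambda>_. (1::real)" "\<lambda>j. j \<in> F"] N
      by (simp add: Int_def) (metis (no_types, lifting) Collect_cong Collect_mem_eq lessThan_iff)
    finally show ?thesis .
  qed
  have h2: "(jnorm (lincomb a x N))^2 \<le> 2 * (jnorm (lincomb (\<lambda>n. a n * sig n) unit_vec N))^2 + 4 * C^2 * k"
    using upper[of a N] sq by simp
  define Ls where "Ls = jnorm (lincomb (\<lambda>n. a n * sig n) unit_vec N)"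
  have Ls0: "0 \<le> Ls" unfolding Ls_def using lincomb_unit_James jnorm_nonneg by blast
  have h3: "Ls \<le> k * (c/2)"
  proof -
    have "Ls \<le> (\<Sum>n<N. \<bar>a n * sig n\<bar>)" unfolding Ls_def using lincomb_unit_James by blast
    also have "\<dots> = (\<Sum>n\<in>F. \<bar>sig n\<bar>)"
    proof -
      have "(\<Sum>n<N. \<bar>a n * sig n\<bar>) = (\<Sum>n\<in>F. \<bar>a n * sig n\<bar>)"
        by (rule sum.mono_neutral_right) (use N in \<open>auto simp: a_def\<close>)
      also have "\<dots> = (\<Sum>n\<in>F. \<bar>sig n\<bar>)" by (rule sum.cong) (auto simp: a_def)
      finally show ?thesis .
    qed
    also have "\<dots> \<le> (\<Sum>n\<in>F. c/2)" by (rule sum_mono) (use bad in force)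
    also have "\<dots> = k * (c/2)" unfolding k_def by simp
    finally show ?thesis .
  qed
  have "(c * k)^2 \<le> (jnorm (lincomb a x N))^2"
    using h1 cpos k0 power_mono by (metis mult_nonneg_nonneg less_imp_le)
  also have "\<dots> \<le> 2 * Ls^2 + 4 * C^2 * k" using h2 unfolding Ls_def .
  also have "Ls^2 \<le> (k * (c/2))^2" using h3 Ls0 power_mono by blast
  finally have "(c * k)^2 \<le> 2 * (k * (c/2))^2 + 4 * C^2 * k" by linarith
  then have "c^2 * k^2 / 2 \<le> 4 * C^2 * k" by (simp add: power_mult_distrib power_divide)
  then have m: "c^2 * k * k \<le> 8 * C^2 * k" by (simp add: power2_eq_square)
  show ?thesis
  proof (cases "k = 0")
    case True then show ?thesis unfolding k_def[symmetric] by simp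
  next
    case False
    then have "0 < k" using k0 by simp
    then have "c^2 * k \<le> 8 * C^2" using m by (simp add: mult.assoc mult.commute[of _ k] mult_le_cancel_left_pos)
    then show ?thesis unfolding k_def[symmetric] using cpos by (simp add: field_simps)
  qed
qed

lemma bad_finite: "finite {n. \<bar>sig n\<bar> < c/2}"
proof (rule ccontr)
  assume inf: "infinite {n. \<bar>sig n\<bar> < c/2}"
  obtain r :: nat where r: "8 * C^2 / c^2 < real r" using reals_Archimedean2 by blast
  obtain F where "F \<subseteq> {n. \<bar>sig n\<bar> < c/2}" "finite F" "card F = r"
    using infinite_arbitrarily_large[OF inf] by blast
  then show False using bad_card[of F] r by auto
qed

lemma good_tail: "\<exists>N0. \<forall>n\<ge>N0. c/2 \<le> \<bar>sig n\<bar>"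
proof -
  obtain N0 where "\<forall>n\<in>{n. \<bar>sig n\<bar> < c/2}. n < N0" using bad_finite finite_nat_set_iff_bounded by blast
  then have "\<forall>n\<ge>N0. c/2 \<le> \<bar>sig n\<bar>" by (auto simp: not_less[symmetric])
  then show ?thesis by blast
qed

end

locale blk2 = blk +
  fixes N0 :: nat
  assumes good: "\<And>n. N0 \<le> n \<Longrightarrow> c/2 \<le> \<bar>sig n\<bar>"
begin

definition G where "G n = {p n..<p (Suc n)}"
definition gsum where "gsum u n = (\<Sum>k\<in>G n. u k)"

lemma sig_nz: "N0 \<le> n \<Longrightarrow> sig n \<noteq> 0"
  using good[of n] cpos by auto

lemma G_disj: "m \<noteq> n \<Longrightarrow> G m \<inter> G n = {}"
proof -
  assume "m \<noteq> n"
  then consider "m < n" | "n < m" by linarith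
  then show ?thesis
  proof cases
    case 1 then have "p (Suc m) \<le> p n" using p_le by simp
    then show ?thesis unfolding G_def by auto
  next
    case 2 then have "p (Suc n) \<le> p m" using p_le by simp
    then show ?thesis unfolding G_def by auto
  qed
qed

lemma G_union: "\<alpha> \<le> \<beta> \<Longrightarrow> (\<Union>n\<in>{\<alpha>..\<beta>}. G n) = {p \<alpha>..<p (Suc \<beta>)}"
proof (induction \<beta>)
  case 0 then show ?case by (simp add: G_def)
next
  case (Suc \<beta>)
  show ?case
  proof (cases "\<alpha> = Suc \<beta>")
    case True then show ?thesis by (simp add: G_def)
  next
    case False
    then have ab: "\<alpha> \<le> \<beta>" using Suc.prems by simp
    have "{\<alpha>..Suc \<beta>} = insert (Suc \<beta>) {\<alpha>..\<beta>}" using ab by auto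
    then have "(\<Union>n\<in>{\<alpha>..Suc \<beta>}. G n) = G (Suc \<beta>) \<union> {p \<alpha>..<p (Suc \<beta>)}"
      using Suc.IH[OF ab] by simp
    also have "\<dots> = {p \<alpha>..<p (Suc (Suc \<beta>))}"
      using p_le[of \<alpha> "Suc \<beta>"] p_le[of "Suc \<beta>" "Suc (Suc \<beta>)"] ab unfolding G_def by auto
    finally show ?thesis .
  qed
qed

lemma G_union_ivl: "\<exists>a b. (\<Union>n\<in>{\<alpha>..\<beta>}. G n) = {a..b}"
proof (cases "\<alpha> \<le> \<beta>")
  case True
  have "0 < p (Suc \<beta>)" using p_mono[of \<beta> "Suc \<beta>"] by simp
  then have "{p \<alpha>..<p (Suc \<beta>)} = {p \<alpha>..p (Suc \<beta>) - 1}" by auto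
  then show ?thesis using G_union[OF True] by metis
next
  case False
  then have "(\<Union>n\<in>{\<alpha>..\<beta>}. G n) = {1..0}" by simp
  then show ?thesis by blast
qed

lemma ivl_inter: "\<exists>a b. {lo..hi} \<inter> {N1..<N} = {a..(b::nat)}"
proof (cases "N = 0")
  case True
  then have "{lo..hi} \<inter> {N1..<N} = {1..0}" by simp
  then show ?thesis by blast
next
  case False
  then have "{lo..hi} \<inter> {N1..<N} = {max lo N1..min hi (N - 1)}" by auto
  then show ?thesis by blast
qed

lemma grouping:
  assumes u: "u \<in> James"
  shows "jnorm (lincomb (\<lambda>n. if N1 \<le> n then gsum u n else 0) unit_vec N) \<le> jnorm u"
proof -
  let ?w = "lincomb (\<lambda>n. if N1 \<le> n then gsum u n else 0) unit_vec N"
  have "?w \<in> James \<and> jnorm ?w \<le> 1 * jnorm u"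
  proof (rule transfer[OF u])
    fix m I assume f: "fam m I"
    define J where "J i = (\<Union>n\<in>I i \<inter> {N1..<N}. G n)" for i
    have famJ: "fam m J"
      unfolding fam_def
    proof (intro conjI allI impI)
      fix i assume i: "i < m"
      obtain lo hi where Ii: "I i = {lo..hi}" using f i unfolding fam_def by blast
      obtain \<alpha> \<beta> where ab: "I i \<inter> {N1..<N} = {\<alpha>..\<beta>}" using ivl_inter[of lo hi N1 N] Ii by metis
      show "\<exists>a b. J i = {a..b}" unfolding J_def ab by (rule G_union_ivl)
    next
      fix i j assume i: "i < m" and j: "j < m" and ij: "i \<noteq> j"
      have d: "I i \<inter> I j = {}" using f i j ij unfolding fam_def by blast
      show "J i \<inter> J j = {}"
      proof (rule ccontr)
        assume "J i \<inter> J j \<noteq> {}"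
        then obtain k n n' where "n \<in> I i" "n' \<in> I j" "k \<in> G n" "k \<in> G n'" unfolding J_def by blast
        moreover have "n \<noteq> n'" using d \<open>n \<in> I i\<close> \<open>n' \<in> I j\<close> by blast
        ultimately show False using G_disj by blast
      qed
    qed
    have "fs ?w m I = fs u m J"
      unfolding fs_def
    proof (rule sum.cong[OF refl])
      fix i assume i: "i \<in> {..<m}"
      have finI: "finite (I i)" using f i unfolding fam_def by auto
      have "(\<Sum>n\<in>I i. ?w n) = (\<Sum>n\<in>I i \<inter> {N1..<N}. gsum u n)"
        using finI by (simp add: sum.inter_restrict lincomb_unit) (rule sum.cong, auto)
      also have "\<dots> = (\<Sum>k\<in>J i. u k)"
        unfolding J_def gsum_def
        by (rule sum.UNION_disjoint[symmetric]) (use finI G_disj in \<open>auto simp: G_def\<close>)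
      finally show "(\<Sum>n\<in>I i. ?w n)^2 = (\<Sum>k\<in>J i. u k)^2" by simp
    qed
    then show "\<exists>m' I'. fam m' I' \<and> fs ?w m I \<le> 1^2 * fs u m' I'" using famJ by auto
  qed simp
  then show ?thesis by simp
qed

end

context blk2 begin

definition Kc where "Kc = sqrt (2 + 16 * C^2 / c^2) / c"

lemma Kc_nonneg: "0 \<le> Kc" unfolding Kc_def using cpos by simp

lemma gbound:
  assumes u: "u \<in> James" and N1: "N0 \<le> N1"
  shows "jnorm (lincomb (\<lambda>n. if N1 \<le> n then gsum u n / sig n else 0) unit_vec N) \<le> Kc * jnorm u"
proof -
  define a where "a n = (if N1 \<le> n then gsum u n / sig n else 0)" for n
  have as: "(\<lambda>n. a n * sig n) = (\<lambda>n. if N1 \<le> n then gsum u n else 0)"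
    using sig_nz N1 by (auto simp: a_def)
  define Le where "Le = jnorm (lincomb a unit_vec N)"
  define Lx where "Lx = jnorm (lincomb a x N)"
  define g where "g = jnorm (lincomb (\<lambda>n. a n * sig n) unit_vec N)"
  have gJ: "lincomb (\<lambda>n. a n * sig n) unit_vec N \<in> James" using lincomb_unit_James by blast
  have g0: "0 \<le> g" unfolding g_def using jnorm_nonneg[OF gJ] .
  have gu: "g \<le> jnorm u" unfolding g_def as using grouping[OF u] .
  have Le0: "0 \<le> Le" unfolding Le_def using lincomb_unit_James jnorm_nonneg by blast
  have c0: "0 < c" by (rule cpos)
  have sqa: "(\<Sum>n<N. (a n)^2) \<le> 4 / c^2 * g^2"
  proof -
    have "(\<Sum>n<N. (a n)^2) \<le> (\<Sum>n<N. 4 / c^2 * (a n * sig n)^2)"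
    proof (rule sum_mono)
      fix n assume "n \<in> {..<N}"
      show "(a n)^2 \<le> 4 / c^2 * (a n * sig n)^2"
      proof (cases "N1 \<le> n")
        case True
        then have "c/2 \<le> \<bar>sig n\<bar>" using good N1 by simp
        then have "(c/2)^2 \<le> (sig n)^2" using c0 by (metis abs_le_square_iff abs_of_pos half_gt_zero)
        then have "(a n)^2 * (c/2)^2 \<le> (a n)^2 * (sig n)^2" by (simp add: mult_left_mono)
        then have "(a n)^2 * c^2 \<le> 4 * (a n * sig n)^2" by (simp add: power_mult_distrib power_divide)
        then show ?thesis using c0 by (simp add: field_simps)
      next
        case False then show ?thesis by (simp add: a_def)
      qed
    qed
    also have "\<dots> = 4 / c^2 * (\<Sum>n<N. (a n * sig n)^2)" by (simp add: sum_distrib_left)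
    finally have s1: "(\<Sum>n<N. (a n)^2) \<le> 4 / c^2 * (\<Sum>n<N. (a n * sig n)^2)" .
    have "(\<Sum>n<N. (a n * sig n)^2) \<le> g^2"
    proof -
      have "(\<Sum>n<N. (a n * sig n)^2) = (\<Sum>n<N. (lincomb (\<lambda>n. a n * sig n) unit_vec N n)^2)"
        by (rule sum.cong) (auto simp: lincomb_unit)
      also have "\<dots> \<le> g^2" unfolding g_def by (rule coord_sq_le[OF gJ])
      finally show ?thesis .
    qed
    then have "4 / c^2 * (\<Sum>n<N. (a n * sig n)^2) \<le> 4 / c^2 * g^2" by (rule mult_left_mono) simp
    then show ?thesis using s1 by linarith
  qed
  have "Lx^2 \<le> 2 * g^2 + 4 * C^2 * (\<Sum>n<N. (a n)^2)" unfolding Lx_def g_def by (rule upper)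
  also have "\<dots> \<le> 2 * g^2 + 4 * C^2 * (4 / c^2 * g^2)"
  proof -
    have "4 * C^2 * (\<Sum>n<N. (a n)^2) \<le> 4 * C^2 * (4 / c^2 * g^2)" by (rule mult_left_mono[OF sqa]) simp
    then show ?thesis by linarith
  qed
  also have "\<dots> = (2 + 16 * C^2 / c^2) * g^2" by (simp add: algebra_simps)
  finally have Lx2: "Lx^2 \<le> (2 + 16 * C^2 / c^2) * g^2" .
  have "c * Le \<le> Lx" unfolding Le_def Lx_def using eqv by blast
  then have "(c * Le)^2 \<le> Lx^2" using c0 Le0 power_mono by (metis mult_nonneg_nonneg less_imp_le)
  then have "(c * Le)^2 \<le> (2 + 16 * C^2 / c^2) * g^2" using Lx2 by linarith
  then have "c * Le \<le> sqrt ((2 + 16 * C^2 / c^2) * g^2)" using real_le_rsqrt by blast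
  also have "\<dots> = sqrt (2 + 16 * C^2 / c^2) * g" using g0 by (simp add: real_sqrt_mult)
  also have "\<dots> \<le> sqrt (2 + 16 * C^2 / c^2) * jnorm u" using gu by (simp add: mult_left_mono)
  finally have "c * Le \<le> sqrt (2 + 16 * C^2 / c^2) * jnorm u" .
  then have "Le \<le> sqrt (2 + 16 * C^2 / c^2) * jnorm u / c" using c0 by (simp add: field_simps)
  then show ?thesis unfolding Le_def a_def Kc_def by simp
qed

end

context blk2 begin

definition dom where "dom n = (if n < N0 then {p n..q n} else G n)"
definition wt where "wt n k = (if n < N0 then x n k / (\<Sum>j\<in>{p n..q n}. (x n j)^2) else 1 / sig n)"
definition f where "f n u = (\<Sum>k\<in>dom n. u k * wt n k)"
definition Proj where "Proj u = (\<lambda>k. lincomb (\<lambda>n. f n u) x (Suc k) k)"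

lemma fin_dom: "finite (dom n)" by (simp add: dom_def G_def)

lemma f_tail: "N0 \<le> n \<Longrightarrow> f n u = gsum u n / sig n"
  by (simp add: f_def dom_def wt_def gsum_def sum_divide_distrib)

lemma f_lin: "f n (\<lambda>k. \<alpha> * u k + \<beta> * v k) = \<alpha> * f n u + \<beta> * f n v"
  by (simp add: f_def algebra_simps sum.distrib sum_distrib_left)

lemma f_bound: "u \<in> James \<Longrightarrow> \<bar>f n u\<bar> \<le> (\<Sum>k\<in>dom n. \<bar>wt n k\<bar>) * jnorm u"
proof -
  assume u: "u \<in> James"
  have "\<bar>f n u\<bar> \<le> (\<Sum>k\<in>dom n. \<bar>u k * wt n k\<bar>)" unfolding f_def by (rule sum_abs)
  also have "\<dots> \<le> (\<Sum>k\<in>dom n. jnorm u * \<bar>wt n k\<bar>)"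
    by (rule sum_mono) (use coord_le[OF u] in \<open>simp add: abs_mult mult_right_mono\<close>)
  also have "\<dots> = (\<Sum>k\<in>dom n. \<bar>wt n k\<bar>) * jnorm u"
    unfolding sum_distrib_right by (simp add: mult.commute)
  finally show ?thesis .
qed

lemma D_pos: "0 < (\<Sum>j\<in>{p n..q n}. (x n j)^2)"
proof -
  obtain k where k: "k \<in> supp (x n)" using ne by blast
  then have kB: "k \<in> {p n..q n}" unfolding p_def q_def using fin by auto
  have "x n k \<noteq> 0" using k by (simp add: supp_def)
  then have "0 < (x n k)^2" by simp
  also have "\<dots> \<le> (\<Sum>j\<in>{p n..q n}. (x n j)^2)" by (rule member_le_sum) (use kB in auto)
  finally show ?thesis .
qed

lemma biorth: "f n (x m) = (if n = m then 1 else 0)"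
proof (cases "n < N0")
  case True
  define D where "D = (\<Sum>j\<in>{p n..q n}. (x n j)^2)"
  have D0: "D \<noteq> 0" using D_pos unfolding D_def by (metis less_irrefl)
  have ff: "f n (x m) = (\<Sum>k\<in>{p n..q n}. x m k * x n k) / D"
    using True by (simp add: f_def dom_def wt_def D_def sum_divide_distrib)
  show ?thesis
  proof (cases "n = m")
    case True
    then show ?thesis using ff D0 by (simp add: D_def power2_eq_square)
  next
    case False
    have "\<forall>k\<in>{p n..q n}. x m k = 0" using blocks_disj[of m n] False outside[of _ m] by blast
    then show ?thesis using ff False by simp
  qed
next
  case False
  then have nN: "N0 \<le> n" by simp
  show ?thesis
  proof (cases "n = m")
    case True
    have "gsum (x n) n = sig n"
      unfolding gsum_def G_def by (rule sum_I_x_full) (use pq[of n] qp[of n] in auto)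
    then show ?thesis using True f_tail[OF nN] sig_nz[OF nN] by simp
  next
    case nm: False
    have "\<forall>k\<in>G n. x m k = 0"
    proof
      fix k assume k: "k \<in> G n"
      show "x m k = 0"
      proof (cases "m < n")
        case True
        then have "q m < p n" by (rule q_lt_p)
        then show ?thesis using k outside[of k m] unfolding G_def by auto
      next
        case False
        then have "Suc n \<le> m" using nm by simp
        then have "p (Suc n) \<le> p m" by (rule p_le)
        then show ?thesis using k outside[of k m] unfolding G_def by auto
      qed
    qed
    then have "gsum (x m) n = 0" unfolding gsum_def by simp
    then show ?thesis using f_tail[OF nN] nm by simp
  qed
qed

lemma lincomb_ext: "K < N \<Longrightarrow> lincomb g x N K = lincomb g x (Suc K) K"
proof -
  assume K: "K < N"
  have "\<forall>n\<in>{..<N} - {..<Suc K}. g n * x n K = 0" using x_zero_big by auto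
  then have "(\<Sum>n<N. g n * x n K) = (\<Sum>n<Suc K. g n * x n K)"
    by (intro sum.mono_neutral_right) (use K in auto)
  then show ?thesis by (simp add: lincomb_def)
qed

lemma Proj_agree: assumes "K < N" shows "Proj u K = lincomb (\<lambda>n. f n u) x N K"
  unfolding Proj_def by (rule sym, rule lincomb_ext[OF assms])

lemma Proj_lin: "Proj (\<lambda>k. \<alpha> * u k + \<beta> * v k) = (\<lambda>k. \<alpha> * Proj u k + \<beta> * Proj v k)"
proof
  fix k
  show "Proj (\<lambda>k. \<alpha> * u k + \<beta> * v k) k = \<alpha> * Proj u k + \<beta> * Proj v k"
    unfolding Proj_def lincomb_def f_lin
    by (simp add: sum.distrib sum_distrib_left distrib_left distrib_right mult.assoc)
qed

lemma f_lincomb: "f n (lincomb a x N) = (if n < N then a n else 0)"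
proof -
  have "f n (lincomb a x N) = (\<Sum>k\<in>dom n. \<Sum>m<N. a m * (x m k * wt n k))"
    unfolding f_def lincomb_def by (simp add: sum_distrib_right mult.assoc)
  also have "\<dots> = (\<Sum>m<N. \<Sum>k\<in>dom n. a m * (x m k * wt n k))" by (rule sum.swap)
  also have "\<dots> = (\<Sum>m<N. a m * f n (x m))" unfolding f_def by (simp add: sum_distrib_left)
  also have "\<dots> = (\<Sum>m<N. if n = m then a n else 0)"
    by (rule sum.cong) (auto simp: biorth)
  also have "\<dots> = (if n < N then a n else 0)" by (simp add: sum.delta)
  finally show ?thesis .
qed

lemma Proj_x: "Proj (lincomb a x N) = lincomb a x N"
proof
  fix K
  define M where "M = max N (Suc K)"
  have "Proj (lincomb a x N) K = lincomb (\<lambda>n. f n (lincomb a x N)) x M K"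
    by (rule Proj_agree) (simp add: M_def)
  also have "\<dots> = lincomb (\<lambda>n. if n < N then a n else 0) x M K" by (simp add: f_lincomb)
  also have "\<dots> = lincomb a x N K"
  proof -
    have "(\<Sum>n<M. (if n < N then a n else 0) * x n K) = (\<Sum>n<M. if n < N then a n * x n K else 0)"
      by (rule sum.cong) auto
    also have "\<dots> = (\<Sum>n\<in>{n\<in>{..<M}. n < N}. a n * x n K)" by (rule sum.inter_filter[symmetric]) simp
    also have "{n\<in>{..<M}. n < N} = {..<N}" unfolding M_def by auto
    finally show ?thesis by (simp add: lincomb_def)
  qed
  finally show "Proj (lincomb a x N) K = lincomb a x N K" .
qed

end

context blk2 begin

definition MM where "MM = C * ((\<Sum>n<N0. \<Sum>k\<in>dom n. \<bar>wt n k\<bar>) + Kc)"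

lemma MM_nonneg: "0 \<le> MM"
  unfolding MM_def using Cpos Kc_nonneg by (intro mult_nonneg_nonneg add_nonneg_nonneg sum_nonneg) auto

lemma Proj_bound:
  assumes u: "u \<in> James"
  shows "Proj u \<in> James \<and> jnorm (Proj u) \<le> MM * jnorm u"
proof (rule local_bound)
  have ju0: "0 \<le> jnorm u" using jnorm_nonneg[OF u] .
  show "0 \<le> MM * jnorm u" using MM_nonneg ju0 by simp
  fix K
  define N where "N = max K N0"
  define w where "w = lincomb (\<lambda>n. f n u) x N"
  have wJ: "w \<in> James" unfolding w_def using lincomb_James[of N x] x_James by blast
  have agree: "\<forall>k<K. w k = Proj u k"
  proof (intro allI impI)
    fix k assume "k < K"
    then have kN: "k < N" unfolding N_def by simp
    show "w k = Proj u k" unfolding w_def by (rule Proj_agree[OF kN, symmetric])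
  qed
  define hd where "hd = lincomb (\<lambda>n. if n < N0 then f n u else 0) unit_vec N"
  define tl where "tl = lincomb (\<lambda>n. if N0 \<le> n then gsum u n / sig n else 0) unit_vec N"
  have hdJ: "hd \<in> James" unfolding hd_def using lincomb_unit_James by blast
  have tlJ: "tl \<in> James" unfolding tl_def using lincomb_unit_James by blast
  have split: "lincomb (\<lambda>n. f n u) unit_vec N = (\<lambda>k. hd k + tl k)"
    unfolding hd_def tl_def by (rule ext) (simp add: lincomb_unit f_tail)
  have A: "jnorm hd \<le> (\<Sum>n<N0. \<Sum>k\<in>dom n. \<bar>wt n k\<bar>) * jnorm u"
  proof -
    have "jnorm hd \<le> (\<Sum>n<N. \<bar>if n < N0 then f n u else 0\<bar>)" unfolding hd_def using lincomb_unit_James by blast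
    also have "\<dots> = (\<Sum>n<N. if n < N0 then \<bar>f n u\<bar> else 0)" by (rule sum.cong) auto
    also have "\<dots> = (\<Sum>n\<in>{n\<in>{..<N}. n < N0}. \<bar>f n u\<bar>)" by (rule sum.inter_filter[symmetric]) simp
    also have "{n\<in>{..<N}. n < N0} = {..<N0}" unfolding N_def by auto
    also have "(\<Sum>n<N0. \<bar>f n u\<bar>) \<le> (\<Sum>n<N0. (\<Sum>k\<in>dom n. \<bar>wt n k\<bar>) * jnorm u)"
      by (rule sum_mono) (rule f_bound[OF u])
    also have "\<dots> = (\<Sum>n<N0. \<Sum>k\<in>dom n. \<bar>wt n k\<bar>) * jnorm u" by (simp add: sum_distrib_right)
    finally show ?thesis .
  qed
  have B: "jnorm tl \<le> Kc * jnorm u" unfolding tl_def by (rule gbound[OF u]) simp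
  have "jnorm w \<le> C * jnorm (lincomb (\<lambda>n. f n u) unit_vec N)" unfolding w_def using eqv by blast
  also have "jnorm (lincomb (\<lambda>n. f n u) unit_vec N) \<le> jnorm hd + jnorm tl"
    unfolding split using James_add[OF hdJ tlJ] by blast
  then have "C * jnorm (lincomb (\<lambda>n. f n u) unit_vec N) \<le> C * (jnorm hd + jnorm tl)"
    using Cpos by simp
  also have "\<dots> \<le> C * ((\<Sum>n<N0. \<Sum>k\<in>dom n. \<bar>wt n k\<bar>) * jnorm u + Kc * jnorm u)"
    using A B Cpos by simp
  also have "\<dots> = MM * jnorm u" unfolding MM_def by (simp add: algebra_simps)
  finally have "jnorm w \<le> MM * jnorm u" .
  then show "\<exists>w. w \<in> James \<and> jnorm w \<le> MM * jnorm u \<and> (\<forall>k<K. w k = Proj u k)"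
    using wJ agree by blast
qed

lemma tail_split:
  assumes "N \<le> N'"
  shows "lincomb g x N' k - lincomb g x N k = lincomb (\<lambda>n. if N \<le> n then g n else 0) x N' k"
proof -
  obtain d where d: "N' = N + d" using assms le_Suc_ex by blast
  have "lincomb (\<lambda>n. if N \<le> n then g n else 0) x N' k = (\<Sum>i<d. g (N + i) * x (N + i) k)"
    unfolding lincomb_def d sum_split_add by simp
  moreover have "lincomb g x N' k = lincomb g x N k + (\<Sum>i<d. g (N + i) * x (N + i) k)"
    unfolding lincomb_def d sum_split_add by simp
  ultimately show ?thesis by simp
qed

lemma Proj_approx:
  assumes u: "u \<in> James" and e: "0 < \<epsilon>"
  shows "\<exists>N. jnorm (\<lambda>k. Proj u k - lincomb (\<lambda>n. f n u) x N k) < \<epsilon>"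
proof -
  have CK: "0 \<le> C * Kc" using Cpos Kc_nonneg by simp
  define e' where "e' = \<epsilon> / (C * Kc + 1)"
  have e'0: "0 < e'" unfolding e'_def using e CK by simp
  obtain M0 where M0: "jnorm (\<lambda>k. if M0 \<le> k then u k else 0) < e'" using tail_small[OF u e'0] by blast
  define t0 where "t0 = (\<lambda>k. if M0 \<le> k then u k else 0)"
  have t0J: "t0 \<in> James" unfolding t0_def using restrict_ge[OF u] by blast
  define N where "N = max N0 M0"
  have NpN: "M0 \<le> p N" using n_le_p[of N] unfolding N_def by simp
  define u' where "u' = (\<lambda>k. if p N \<le> k then t0 k else 0)"
  have u'J: "u' \<in> James" and u'n: "jnorm u' \<le> jnorm t0" unfolding u'_def using restrict_ge[OF t0J] by auto
  have gs: "gsum u' n = gsum u n" if "N \<le> n" for n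
  proof -
    have "\<forall>k\<in>G n. u' k = u k"
    proof
      fix k assume "k \<in> G n"
      then have "p n \<le> k" unfolding G_def by simp
      moreover have "p N \<le> p n" using p_le[OF that] .
      ultimately show "u' k = u k" unfolding u'_def t0_def using NpN by auto
    qed
    then show ?thesis unfolding gsum_def by simp
  qed
  have d0: "0 \<le> C * Kc * jnorm u'" using CK jnorm_nonneg[OF u'J] by simp
  have bd: "(\<lambda>k. Proj u k - lincomb (\<lambda>n. f n u) x N k) \<in> James \<and>
      jnorm (\<lambda>k. Proj u k - lincomb (\<lambda>n. f n u) x N k) \<le> C * Kc * jnorm u'"
  proof (rule local_bound[OF d0])
    fix K
    define N' where "N' = max K N"
    define w where "w = lincomb (\<lambda>n. if N \<le> n then gsum u' n / sig n else 0) x N'"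
    have wJ: "w \<in> James" unfolding w_def using lincomb_James[of N' x] x_James by blast
    have coef: "(\<lambda>n. if N \<le> n then f n u else 0) = (\<lambda>n. if N \<le> n then gsum u' n / sig n else 0)"
    proof
      fix n show "(if N \<le> n then f n u else 0) = (if N \<le> n then gsum u' n / sig n else 0)"
      proof (cases "N \<le> n")
        case True
        then have "N0 \<le> n" unfolding N_def by simp
        then show ?thesis using True f_tail gs by simp
      qed simp
    qed
    have agree: "\<forall>k<K. w k = Proj u k - lincomb (\<lambda>n. f n u) x N k"
    proof (intro allI impI)
      fix k assume "k < K"
      then have "Proj u k = lincomb (\<lambda>n. f n u) x N' k" unfolding N'_def by (intro Proj_agree) simp
      then show "w k = Proj u k - lincomb (\<lambda>n. f n u) x N k"
        using tail_split[of N N' "\<lambda>n. f n u" k] unfolding w_def coef N'_def by simp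
    qed
    have "jnorm w \<le> C * jnorm (lincomb (\<lambda>n. if N \<le> n then gsum u' n / sig n else 0) unit_vec N')"
      unfolding w_def using eqv by blast
    also have "jnorm (lincomb (\<lambda>n. if N \<le> n then gsum u' n / sig n else 0) unit_vec N') \<le> Kc * jnorm u'"
      by (rule gbound[OF u'J]) (simp add: N_def)
    then have "C * jnorm (lincomb (\<lambda>n. if N \<le> n then gsum u' n / sig n else 0) unit_vec N') \<le> C * (Kc * jnorm u')"
      using Cpos by simp
    finally have "jnorm w \<le> C * Kc * jnorm u'" by (simp add: mult.assoc)
    then show "\<exists>w. w \<in> James \<and> jnorm w \<le> C * Kc * jnorm u' \<and>
        (\<forall>k<K. w k = Proj u k - lincomb (\<lambda>n. f n u) x N k)" using wJ agree by blast
  qed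
  have "C * Kc * jnorm u' \<le> C * Kc * e'"
    using u'n M0 CK unfolding t0_def by (intro mult_left_mono) auto
  also have "\<dots> < \<epsilon>"
  proof -
    have "\<epsilon> = (C * Kc + 1) * e'" unfolding e'_def using CK by simp
    then show ?thesis using e'0 by (simp add: algebra_simps)
  qed
  finally show ?thesis using bd by (meson le_less_trans)
qed

lemma Proj_closed:
  assumes u: "u \<in> James"
  shows "Proj u \<in> closed_span x"
proof -
  have "Proj u \<in> James" using Proj_bound[OF u] by simp
  moreover have "\<forall>\<epsilon>>0. \<exists>a N. jnorm (\<lambda>k. Proj u k - lincomb a x N k) < \<epsilon>"
  proof (intro allI impI)
    fix \<epsilon> :: real assume "0 < \<epsilon>"
    then obtain N where "jnorm (\<lambda>k. Proj u k - lincomb (\<lambda>n. f n u) x N k) < \<epsilon>"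
      using Proj_approx[OF u] by blast
    then show "\<exists>a N. jnorm (\<lambda>k. Proj u k - lincomb a x N k) < \<epsilon>" by blast
  qed
  ultimately show ?thesis unfolding closed_span_def by (intro CollectI conjI)
qed

lemma Proj_id:
  assumes y: "y \<in> closed_span x"
  shows "Proj y = y"
proof -
  have yJ: "y \<in> James" and ap: "\<forall>\<epsilon>>0. \<exists>a N. jnorm (\<lambda>k. y k - lincomb a x N k) < \<epsilon>"
    using y unfolding closed_span_def by auto
  define d where "d = (\<lambda>k. Proj y k - y k)"
  have PyJ: "Proj y \<in> James" using Proj_bound[OF yJ] by blast
  have dJ: "d \<in> James" unfolding d_def using James_diff[OF PyJ yJ] by blast
  have small: "jnorm d \<le> (MM + 1) * \<epsilon>" if e: "0 < \<epsilon>" for \<epsilon>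
  proof -
    obtain a N where aN: "jnorm (\<lambda>k. y k - lincomb a x N k) < \<epsilon>" using ap e by blast
    define z where "z = lincomb a x N"
    define r where "r = (\<lambda>k. y k - z k)"
    have zJ: "z \<in> James" unfolding z_def using lincomb_James[of N x] x_James by blast
    have rJ: "r \<in> James" unfolding r_def using James_diff[OF yJ zJ] by blast
    have yr: "y = (\<lambda>k. 1 * r k + 1 * z k)" unfolding r_def by simp
    have P0: "Proj y = (\<lambda>k. 1 * Proj r k + 1 * Proj z k)" by (subst yr, rule Proj_lin)
    have Pz: "Proj z = z" unfolding z_def by (rule Proj_x)
    have dd: "d = (\<lambda>k. Proj r k - r k)"
    proof (rule ext)
      fix k
      have Pk: "Proj y k = Proj r k + z k" using fun_cong[OF P0, of k] Pz by simp
      have rk: "r k = y k - z k" unfolding r_def by simp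
      show "d k = Proj r k - r k" unfolding d_def using Pk rk by simp
    qed
    have PrJ: "Proj r \<in> James" by (rule conjunct1[OF Proj_bound[OF rJ]])
    have "jnorm (\<lambda>k. Proj r k - r k) \<le> jnorm (Proj r) + jnorm r" by (rule conjunct2[OF James_diff[OF PrJ rJ]])
    then have "jnorm d \<le> jnorm (Proj r) + jnorm r" unfolding dd .
    also have "\<dots> \<le> MM * jnorm r + jnorm r" using conjunct2[OF Proj_bound[OF rJ]] by linarith
    also have "\<dots> = (MM + 1) * jnorm r" by (simp add: algebra_simps)
    also have "\<dots> \<le> (MM + 1) * \<epsilon>"
    proof -
      have "jnorm r < \<epsilon>" using aN unfolding r_def z_def .
      then have le: "jnorm r \<le> \<epsilon>" by simp
      have m0: "0 \<le> MM + 1" using MM_nonneg by simp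
      show ?thesis by (rule mult_left_mono[OF le m0])
    qed
    finally show ?thesis .
  qed
  have "jnorm d \<le> 0"
  proof (rule ccontr)
    assume "\<not> jnorm d \<le> 0"
    then have pos: "0 < jnorm d" by simp
    define \<epsilon> where "\<epsilon> = jnorm d / (2 * (MM + 1))"
    have "0 < \<epsilon>" unfolding \<epsilon>_def using pos MM_nonneg by simp
    then have "jnorm d \<le> (MM + 1) * \<epsilon>" by (rule small)
    also have "\<dots> = jnorm d / 2"
    proof -
      have "0 < MM + 1" using MM_nonneg by simp
      then have h: "MM + 1 \<noteq> 0" by simp
      have gen: "\<And>a X::real. a \<noteq> 0 \<Longrightarrow> a * (X / (2 * a)) = X / 2"
        by (simp add: field_simps)
      show ?thesis unfolding \<epsilon>_def by (rule gen[OF h])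
    qed
    finally show False using pos by simp
  qed
  then have d0: "d = (\<lambda>_. 0)" by (rule jnorm_zero[OF dJ])
  show ?thesis
  proof (rule ext)
    fix k
    have "d k = 0" using d0 by simp
    then show "Proj y k = y k" unfolding d_def by simp
  qed
qed

end

theorem mainTheorem14:
  fixes x :: "nat \<Rightarrow> nat \<Rightarrow> real"
  assumes "block_sequence x"
    and "equivalent_seq x unit_vec"
  shows "complemented (closed_span x)"
proof -
  obtain c C where cC: "0 < c" "0 < C"
    "\<forall>a N. c * jnorm (lincomb a unit_vec N) \<le> jnorm (lincomb a x N) \<and>
           jnorm (lincomb a x N) \<le> C * jnorm (lincomb a unit_vec N)"
    using assms(2) unfolding equivalent_seq_def by blast
  interpret B: blk x c C using assms(1) cC by unfold_locales auto
  obtain N0 where N0: "\<forall>n\<ge>N0. c/2 \<le> \<bar>B.sig n\<bar>" using B.good_tail by blast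
  interpret B2: blk2 x c C N0 using N0 by unfold_locales auto
  show ?thesis unfolding complemented_def
  proof (intro exI[of _ B2.Proj] conjI ballI allI)
    fix u assume "u \<in> James" then show "B2.Proj u \<in> closed_span x" by (rule B2.Proj_closed)
  next
    fix u v \<alpha> \<beta> show "B2.Proj (\<lambda>k. \<alpha> * u k + \<beta> * v k) = (\<lambda>k. \<alpha> * B2.Proj u k + \<beta> * B2.Proj v k)"
      by (rule B2.Proj_lin)
  next
    show "\<exists>M. \<forall>u\<in>James. jnorm (B2.Proj u) \<le> M * jnorm u"
    proof (rule exI[of _ B2.MM], intro ballI)
      fix u assume "u \<in> James"
      then show "jnorm (B2.Proj u) \<le> B2.MM * jnorm u" using B2.Proj_bound by simp
    qed
  next
    fix y assume "y \<in> closed_span x" then show "B2.Proj y = y" by (rule B2.Proj_id)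
  qed
qed


end
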